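(* Let $\mu$ be a positive finite Borel measure supported in $[0,1]$. Let $\mathcal{D}\subset\ell^2(\mathbb{Z})$ be the subspace of finitely supported sequences, and define $F:\mathcal{D}\to L^2(\mu)$ by $F((c_k)_{k\in\mathbb{Z}})(x)=\sum_k c_k e_k(x)$, where $e_k(x)=e^{i2\pi kx}$. If $$\sum_{k\in\mathbb{Z}}\Big|\int e_k(x)\,d\mu(x)\Big|^2<\infty,$$ then the operator $F$ (as a densely defined operator from $\ell^2(\mathbb{Z})$ into $L^2(\mu)$) is closable.
   Context: An operator is closable if the closure of its graph is the graph of a linear operator. *)

theory Defs
  imports "HOL-Analysis.Analysis"
begin

definition ek :: "int \<Rightarrow> real \<Rightarrow> complex" where
  "ek k x = exp (\<i> * complex_of_real (2 * pi * real_of_int k * x))"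

definition l2Z :: "(int \<Rightarrow> complex) set" where
  "l2Z = {c. (\<lambda>k. (cmod (c k))^2) summable_on UNIV}"

definition l2Z_dist :: "(int \<Rightarrow> complex) \<Rightarrow> (int \<Rightarrow> complex) \<Rightarrow> real" where
  "l2Z_dist c d = sqrt (\<Sum>\<^sub>\<infinity>k\<in>UNIV. (cmod (c k - d k))^2)"

definition finsupp_seqs :: "(int \<Rightarrow> complex) set" where
  "finsupp_seqs = {c. finite {k. c k \<noteq> 0}}"

text \<open>L^2(mu) (complex valued), represented by functions, with its (pseudo)distance.\<close>
definition L2 :: "real measure \<Rightarrow> (real \<Rightarrow> complex) set" where
  "L2 M = {f. f \<in> borel_measurable M \<and> integrable M (\<lambda>x. (cmod (f x))^2)}"

definition L2_dist :: "real measure \<Rightarrow> (real \<Rightarrow> complex) \<Rightarrow> (real \<Rightarrow> complex) \<Rightarrow> real" where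
  "L2_dist M f g = sqrt (LINT x|M. (cmod (f x - g x))^2)"

definition Fop :: "(int \<Rightarrow> complex) \<Rightarrow> real \<Rightarrow> complex" where
  "Fop c x = (\<Sum>k\<in>{k. c k \<noteq> 0}. c k * ek k x)"

definition graph_closure :: "real measure \<Rightarrow> ((int \<Rightarrow> complex) \<times> (real \<Rightarrow> complex)) set" where
  "graph_closure M = {(c, g). c \<in> l2Z \<and> g \<in> L2 M \<and>
     (\<exists>s. (\<forall>n. s n \<in> finsupp_seqs) \<and>
          (\<lambda>n. l2Z_dist (s n) c) \<longlonglongrightarrow> 0 \<and>
          (\<lambda>n. L2_dist M (Fop (s n)) g) \<longlonglongrightarrow> 0)}"

text \<open>F is closable: the closure of its graph is the graph of a linear operator
  T with (linear) domain Dom, with values in L^2(mu) taken modulo mu-a.e. equality.\<close>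
definition closable_F :: "real measure \<Rightarrow> bool" where
  "closable_F M \<longleftrightarrow> (\<exists>Dom T.
     (\<forall>c\<in>Dom. \<forall>d\<in>Dom. (\<lambda>k. c k + d k) \<in> Dom) \<and>
     (\<forall>c\<in>Dom. \<forall>a. (\<lambda>k. a * c k) \<in> Dom) \<and>
     (\<forall>c\<in>Dom. T c \<in> L2 M) \<and>
     (\<forall>c\<in>Dom. \<forall>d\<in>Dom. AE x in M. T (\<lambda>k. c k + d k) x = T c x + T d x) \<and>
     (\<forall>c\<in>Dom. \<forall>a. AE x in M. T (\<lambda>k. a * c k) x = a * T c x) \<and>
     graph_closure M = {(c, g). c \<in> Dom \<and> g \<in> L2 M \<and> (AE x in M. g x = T c x)})"

end

theory Submission
  imports Defs
begin


definition L2g :: "'a measure \<Rightarrow> ('a \<Rightarrow> complex) set" where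
  "L2g N = {f. f \<in> borel_measurable N \<and> integrable N (\<lambda>x. (cmod (f x))^2)}"

definition nd :: "'a measure \<Rightarrow> ('a \<Rightarrow> complex) \<Rightarrow> real" where
  "nd N f = sqrt (LINT x|N. (cmod (f x))^2)"

lemma nd_nonneg: "nd N f \<ge> 0"
  unfolding nd_def by (simp add: integral_nonneg_AE)

lemma L2g_normprod_int:
  assumes "f \<in> L2g N" "g \<in> L2g N"
  shows "integrable N (\<lambda>x. cmod (f x) * cmod (g x))"
proof (rule Bochner_Integration.integrable_bound)
  show "integrable N (\<lambda>x. (cmod (f x))^2 + (cmod (g x))^2)"
    using assms by (auto simp: L2g_def)
  show "(\<lambda>x. cmod (f x) * cmod (g x)) \<in> borel_measurable N"
    using assms by (auto simp: L2g_def)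
  show "AE x in N. norm (cmod (f x) * cmod (g x)) \<le> norm ((cmod (f x))^2 + (cmod (g x))^2)"
  proof (intro AE_I2)
    fix x
    have "2 * (cmod (f x) * cmod (g x)) \<le> (cmod (f x))^2 + (cmod (g x))^2"
      using sum_squares_bound[of "cmod (f x)" "cmod (g x)"] by simp
    moreover have "0 \<le> cmod (f x) * cmod (g x)" by simp
    ultimately have "cmod (f x) * cmod (g x) \<le> (cmod (f x))^2 + (cmod (g x))^2" by linarith
    thus "norm (cmod (f x) * cmod (g x)) \<le> norm ((cmod (f x))^2 + (cmod (g x))^2)"
      by simp
  qed
qed

lemma L2g_prod_int:
  assumes "f \<in> L2g N" "g \<in> L2g N"
  shows "integrable N (\<lambda>x. f x * cnj (g x))"
proof -
  have "integrable N (\<lambda>x. norm (f x * cnj (g x)))"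
    using L2g_normprod_int[OF assms] by (simp add: norm_mult)
  moreover have "(\<lambda>x. f x * cnj (g x)) \<in> borel_measurable N"
  proof -
    have [measurable]: "f \<in> borel_measurable N" "g \<in> borel_measurable N"
      using assms by (auto simp: L2g_def)
    have [measurable]: "(\<lambda>x. cnj (g x)) \<in> borel_measurable N"
      by (rule borel_measurable_continuous_on[where f=cnj]) (auto intro: continuous_intros)
    show ?thesis by measurable
  qed
  ultimately show ?thesis using integrable_norm_iff by blast
qed

lemma CS_real:
  assumes "f \<in> L2g N" "g \<in> L2g N"
  shows "(LINT x|N. cmod (f x) * cmod (g x)) \<le> nd N f * nd N g"
proof -
  define u where "u = (LINT x|N. cmod (f x) * cmod (g x))"
  define A where "A = (LINT x|N. (cmod (f x))^2)"
  define B where "B = (LINT x|N. (cmod (g x))^2)"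
  have mf: "(\<lambda>x. ennreal (cmod (f x))) \<in> borel_measurable N"
    using assms by (auto simp: L2g_def)
  have mg: "(\<lambda>x. ennreal (cmod (g x))) \<in> borel_measurable N"
    using assms by (auto simp: L2g_def)
  have u0: "u \<ge> 0" unfolding u_def by (simp add: integral_nonneg_AE)
  have A0: "A \<ge> 0" unfolding A_def by (simp add: integral_nonneg_AE)
  have B0: "B \<ge> 0" unfolding B_def by (simp add: integral_nonneg_AE)
  have eu: "(\<integral>\<^sup>+x. ennreal (cmod (f x)) * ennreal (cmod (g x)) \<partial>N) = ennreal u"
    unfolding u_def
    by (subst nn_integral_eq_integral[symmetric])
       (auto simp: L2g_normprod_int[OF assms] ennreal_mult)
  have eA: "(\<integral>\<^sup>+x. ennreal (cmod (f x)) ^ 2 \<partial>N) = ennreal A"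
    unfolding A_def
    by (subst nn_integral_eq_integral[symmetric])
       (use assms in \<open>auto simp: L2g_def ennreal_power\<close>)
  have eB: "(\<integral>\<^sup>+x. ennreal (cmod (g x)) ^ 2 \<partial>N) = ennreal B"
    unfolding B_def
    by (subst nn_integral_eq_integral[symmetric])
       (use assms in \<open>auto simp: L2g_def ennreal_power\<close>)
  have "(ennreal u)^2 \<le> ennreal A * ennreal B"
    using Cauchy_Schwarz_nn_integral[OF mf mg] eu eA eB by simp
  hence "ennreal (u^2) \<le> ennreal (A * B)"
    using u0 A0 B0 by (simp add: ennreal_power ennreal_mult)
  hence "u^2 \<le> A * B" using A0 B0 by (simp add: ennreal_le_iff)
  hence "u \<le> sqrt (A * B)" using real_le_rsqrt by blast
  thus ?thesis unfolding u_def nd_def A_def B_def by (simp add: real_sqrt_mult)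
qed

lemma CS:
  assumes "f \<in> L2g N" "g \<in> L2g N"
  shows "cmod (LINT x|N. f x * cnj (g x)) \<le> nd N f * nd N g"
proof -
  have "cmod (LINT x|N. f x * cnj (g x)) \<le> (LINT x|N. cmod (f x * cnj (g x)))"
    by (rule integral_norm_bound)
  also have "\<dots> = (LINT x|N. cmod (f x) * cmod (g x))" by (simp add: norm_mult)
  also have "\<dots> \<le> nd N f * nd N g" by (rule CS_real[OF assms])
  finally show ?thesis .
qed

lemma L2g_add:
  assumes "f \<in> L2g N" "g \<in> L2g N"
  shows "(\<lambda>x. f x + g x) \<in> L2g N"
proof -
  have "integrable N (\<lambda>x. (cmod (f x + g x))^2)"
  proof (rule Bochner_Integration.integrable_bound)
    show "integrable N (\<lambda>x. 2 * (cmod (f x))^2 + 2 * (cmod (g x))^2)"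
      using assms by (auto simp: L2g_def)
    show "(\<lambda>x. (cmod (f x + g x))^2) \<in> borel_measurable N"
      using assms by (auto simp: L2g_def)
    show "AE x in N. norm ((cmod (f x + g x))^2) \<le> norm (2 * (cmod (f x))^2 + 2 * (cmod (g x))^2)"
    proof (intro AE_I2)
      fix x
      have "cmod (f x + g x) \<le> cmod (f x) + cmod (g x)" by (rule norm_triangle_ineq)
      hence "(cmod (f x + g x))^2 \<le> (cmod (f x) + cmod (g x))^2"
        by (simp add: power_mono)
      also have "\<dots> \<le> 2 * (cmod (f x))^2 + 2 * (cmod (g x))^2"
        using sum_squares_bound[of "cmod (f x)" "cmod (g x)"] by (simp add: power2_sum)
      finally show "norm ((cmod (f x + g x))^2) \<le> norm (2 * (cmod (f x))^2 + 2 * (cmod (g x))^2)"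
        by simp
    qed
  qed
  thus ?thesis using assms by (auto simp: L2g_def)
qed

lemma L2g_scale:
  assumes "f \<in> L2g N"
  shows "(\<lambda>x. a * f x) \<in> L2g N"
  using assms by (auto simp: L2g_def norm_mult power_mult_distrib)

lemma nd_scale: "nd N (\<lambda>x. a * f x) = cmod a * nd N f"
  by (simp add: nd_def norm_mult power_mult_distrib real_sqrt_mult)

lemma nd_triangle:
  assumes "f \<in> L2g N" "g \<in> L2g N"
  shows "nd N (\<lambda>x. f x + g x) \<le> nd N f + nd N g"
proof -
  have i1: "integrable N (\<lambda>x. (cmod (f x))^2)" and i2: "integrable N (\<lambda>x. (cmod (g x))^2)"
    using assms by (auto simp: L2g_def)
  have i3: "integrable N (\<lambda>x. cmod (f x) * cmod (g x))" by (rule L2g_normprod_int[OF assms])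
  have i4: "integrable N (\<lambda>x. (cmod (f x + g x))^2)"
    using L2g_add[OF assms] by (auto simp: L2g_def)
  have "(LINT x|N. (cmod (f x + g x))^2) \<le>
        (LINT x|N. (cmod (f x))^2 + 2 * (cmod (f x) * cmod (g x)) + (cmod (g x))^2)"
  proof (rule integral_mono)
    show "integrable N (\<lambda>x. (cmod (f x))^2 + 2 * (cmod (f x) * cmod (g x)) + (cmod (g x))^2)"
      using i1 i2 i3 by auto
    fix x
    have "cmod (f x + g x) \<le> cmod (f x) + cmod (g x)" by (rule norm_triangle_ineq)
    hence "(cmod (f x + g x))^2 \<le> (cmod (f x) + cmod (g x))^2"
      by (simp add: power_mono)
    thus "(cmod (f x + g x))^2 \<le> (cmod (f x))^2 + 2 * (cmod (f x) * cmod (g x)) + (cmod (g x))^2"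
      by (simp add: power2_sum)
  qed (use i4 in auto)
  also have "\<dots> = (LINT x|N. (cmod (f x))^2) + 2 * (LINT x|N. cmod (f x) * cmod (g x)) + (LINT x|N. (cmod (g x))^2)"
    using i1 i2 i3 by simp
  also have "\<dots> \<le> (nd N f)^2 + 2 * (nd N f * nd N g) + (nd N g)^2"
    using CS_real[OF assms] by (simp add: nd_def integral_nonneg_AE)
  also have "\<dots> = (nd N f + nd N g)^2" by (simp add: power2_sum)
  finally have "(nd N (\<lambda>x. f x + g x))^2 \<le> (nd N f + nd N g)^2"
    by (simp add: nd_def integral_nonneg_AE)
  thus ?thesis using nd_nonneg[of N f] nd_nonneg[of N g]
    by (meson power2_le_imp_le add_nonneg_nonneg)
qed



lemma bridge_summable:
  fixes h :: "int \<Rightarrow> real"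
  shows "h summable_on UNIV \<longleftrightarrow> integrable (count_space UNIV) h"
  using summable_on_iff_abs_summable_on_real[of h UNIV] abs_summable_equivalent[of h UNIV]
    Infinite_Set_Sum.abs_summable_on_def[of h UNIV] by simp

lemma bridge_infsum:
  fixes h :: "int \<Rightarrow> real"
  shows "infsum h UNIV = integral\<^sup>L (count_space UNIV) h"
proof (cases "h summable_on UNIV")
  case True
  hence "Infinite_Set_Sum.abs_summable_on h UNIV"
    using summable_on_iff_abs_summable_on_real[of h UNIV] abs_summable_equivalent[of h UNIV] by simp
  from infsetsum_infsum[OF this] show ?thesis by (simp add: infsetsum_def)
next
  case False
  thus ?thesis using bridge_summable[of h] by (simp add: infsum_not_exists not_integrable_integral_eq)
qed

lemma l2Z_L2g: "c \<in> l2Z \<longleftrightarrow> c \<in> L2g (count_space UNIV)"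
  unfolding l2Z_def L2g_def using bridge_summable by simp

lemma l2Z_dist_nd: "l2Z_dist c d = nd (count_space UNIV) (\<lambda>k. c k - d k)"
  unfolding l2Z_dist_def nd_def using bridge_infsum by simp

lemma L2_L2g: "L2 M = L2g M"
  unfolding L2_def L2g_def by simp

lemma L2_dist_nd: "L2_dist M f g = nd M (\<lambda>x. f x - g x)"
  unfolding L2_dist_def nd_def by simp

lemma finsupp_l2Z:
  assumes "c \<in> finsupp_seqs" shows "c \<in> l2Z"
proof -
  have fin: "finite {k. c k \<noteq> 0}" using assms by (simp add: finsupp_seqs_def)
  have "(\<lambda>k. (cmod (c k))^2) summable_on {k. c k \<noteq> 0}" using fin by simp
  moreover have "(\<lambda>k. (cmod (c k))^2) summable_on {k. c k \<noteq> 0} \<longleftrightarrow>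
       (\<lambda>k. (cmod (c k))^2) summable_on UNIV"
    by (rule summable_on_cong_neutral) auto
  ultimately show ?thesis by (simp add: l2Z_def)
qed

lemma l2Z_finsupp_norm:
  assumes "finite S" "\<And>k. k \<notin> S \<Longrightarrow> c k = 0"
  shows "l2Z_dist c (\<lambda>k. 0) = sqrt (\<Sum>k\<in>S. (cmod (c k))^2)"
proof -
  have "infsum (\<lambda>k. (cmod (c k - 0))^2) UNIV = infsum (\<lambda>k. (cmod (c k))^2) S"
    by (rule infsum_cong_neutral) (use assms in auto)
  thus ?thesis using assms(1) by (simp add: l2Z_dist_def)
qed

lemma Fop_eq:
  assumes "finite S" "{k. c k \<noteq> 0} \<subseteq> S"
  shows "Fop c x = (\<Sum>k\<in>S. c k * ek k x)"
  unfolding Fop_def by (rule sum.mono_neutral_left) (use assms in auto)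

lemma ek_norm[simp]: "cmod (ek k x) = 1"
  unfolding ek_def by (simp add: norm_exp_i_times)

lemma ek_cont: "continuous_on UNIV (ek k)"
  unfolding ek_def by (intro continuous_intros)

lemma ek_mult: "ek k x * cnj (ek j x) = ek (k - j) x"
proof -
  have c: "cnj (exp (\<i> * complex_of_real t)) = exp (- (\<i> * complex_of_real t))" for t
    by (simp add: exp_cnj)
  show ?thesis
    unfolding ek_def c mult_exp_exp
    by (simp add: algebra_simps)
qed

context
  fixes M :: "real measure"
  assumes sM: "sets M = sets borel" and fM: "finite_measure M"
begin

lemma ek_meas: "ek k \<in> borel_measurable M"
  using borel_measurable_continuous_onI[OF ek_cont] measurable_cong_sets[OF sM refl] by blast

lemma ek_int: "integrable M (ek k)"
  by (rule finite_measure.integrable_const_bound[OF fM, where B=1]) (auto simp: ek_meas)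

lemma Fop_meas: "Fop c \<in> borel_measurable M"
proof -
  have [measurable]: "\<And>k. ek k \<in> borel_measurable M" by (rule ek_meas)
  show ?thesis unfolding Fop_def[abs_def] by measurable
qed

lemma Fop_L2:
  shows "Fop c \<in> L2g M"
proof -
  have "AE x in M. norm ((cmod (Fop c x))^2) \<le> (\<Sum>k\<in>{k. c k \<noteq> 0}. cmod (c k))^2"
  proof (intro AE_I2)
    fix x
    have "cmod (Fop c x) \<le> (\<Sum>k\<in>{k. c k \<noteq> 0}. cmod (c k * ek k x))"
      unfolding Fop_def by (rule norm_sum)
    also have "\<dots> = (\<Sum>k\<in>{k. c k \<noteq> 0}. cmod (c k))" by (simp add: norm_mult)
    finally show "norm ((cmod (Fop c x))^2) \<le> (\<Sum>k\<in>{k. c k \<noteq> 0}. cmod (c k))^2"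
      by (simp add: power_mono)
  qed
  moreover have "(\<lambda>x. (cmod (Fop c x))^2) \<in> borel_measurable M"
    using Fop_meas by simp
  ultimately have "integrable M (\<lambda>x. (cmod (Fop c x))^2)"
    by (rule finite_measure.integrable_const_bound[OF fM])
  thus ?thesis using Fop_meas by (simp add: L2g_def)
qed

end


lemma fin_CS:
  fixes x y :: "'a \<Rightarrow> real"
  shows "(\<Sum>k\<in>S. x k * y k) \<le> sqrt (\<Sum>k\<in>S. (x k)^2) * sqrt (\<Sum>k\<in>S. (y k)^2)"
proof -
  have "(\<Sum>k\<in>S. x k * y k)^2 \<le> (\<Sum>k\<in>S. (x k)^2) * (\<Sum>k\<in>S. (y k)^2)"
    by (rule Cauchy_Schwarz_ineq_sum)
  hence "(\<Sum>k\<in>S. x k * y k) \<le> sqrt ((\<Sum>k\<in>S. (x k)^2) * (\<Sum>k\<in>S. (y k)^2))"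
    by (rule real_le_rsqrt)
  thus ?thesis by (simp add: real_sqrt_mult)
qed

context
  fixes M :: "real measure"
  assumes sM: "sets M = sets borel" and fM: "finite_measure M"
    and hm: "(\<lambda>k::int. (cmod (CLINT x|M. ek k x))^2) summable_on UNIV"
begin

definition "M2 = infsum (\<lambda>k::int. (cmod (CLINT x|M. ek k x))^2) UNIV"

lemma partial_le:
  assumes "finite S"
  shows "(\<Sum>k\<in>S. (cmod (CLINT x|M. ek (k - j) x))^2) \<le> M2"
proof -
  have "(\<Sum>k\<in>S. (cmod (CLINT x|M. ek (k - j) x))^2) =
        (\<Sum>l\<in>(\<lambda>k. k - j) ` S. (cmod (CLINT x|M. ek l x))^2)"
    by (subst sum.reindex) (auto simp: inj_on_def)
  also have "\<dots> \<le> M2"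
    unfolding M2_def by (rule finite_sum_le_infsum[OF hm]) (use assms in auto)
  finally show ?thesis .
qed

lemma M2_nonneg: "M2 \<ge> 0"
  unfolding M2_def by (rule infsum_nonneg) auto

lemma stepA:
  assumes "finite S" "finite J"
  shows "cmod (LINT x|M. (\<Sum>k\<in>S. a k * ek k x) * cnj (\<Sum>j\<in>J. b j * ek j x))
     \<le> sqrt (\<Sum>k\<in>S. (cmod (a k))^2) * (\<Sum>j\<in>J. cmod (b j)) * sqrt M2"
proof -
  define mu where "mu l = (CLINT x|M. ek l x)" for l
  have int: "integrable M (ek l)" for l by (rule ek_int[OF sM fM])
  have eq: "(\<Sum>k\<in>S. a k * ek k x) * cnj (\<Sum>j\<in>J. b j * ek j x) =
        (\<Sum>j\<in>J. \<Sum>k\<in>S. (cnj (b j) * a k) * ek (k - j) x)" for x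
    by (simp add: cnj_sum sum_distrib_left sum_distrib_right ek_mult[symmetric] mult_ac
        flip: sum.swap[of _ S J])
  have "(LINT x|M. (\<Sum>k\<in>S. a k * ek k x) * cnj (\<Sum>j\<in>J. b j * ek j x)) =
        (\<Sum>j\<in>J. cnj (b j) * (\<Sum>k\<in>S. a k * mu (k - j)))"
    unfolding eq mu_def using int
    by (simp add: sum_distrib_left mult.assoc)
  hence "cmod (LINT x|M. (\<Sum>k\<in>S. a k * ek k x) * cnj (\<Sum>j\<in>J. b j * ek j x))
      \<le> (\<Sum>j\<in>J. cmod (b j) * cmod (\<Sum>k\<in>S. a k * mu (k - j)))"
    by (metis (no_types, lifting) complex_mod_cnj norm_mult norm_sum sum.cong)
  also have "\<dots> \<le> (\<Sum>j\<in>J. cmod (b j) * (sqrt (\<Sum>k\<in>S. (cmod (a k))^2) * sqrt M2))"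
  proof (rule sum_mono, rule mult_left_mono)
    fix j
    have "cmod (\<Sum>k\<in>S. a k * mu (k - j)) \<le> (\<Sum>k\<in>S. cmod (a k) * cmod (mu (k - j)))"
      by (metis (no_types, lifting) norm_mult norm_sum sum.cong)
    also have "\<dots> \<le> sqrt (\<Sum>k\<in>S. (cmod (a k))^2) * sqrt (\<Sum>k\<in>S. (cmod (mu (k - j)))^2)"
      by (rule fin_CS)
    also have "\<dots> \<le> sqrt (\<Sum>k\<in>S. (cmod (a k))^2) * sqrt M2"
      using partial_le[OF assms(1), of j] unfolding mu_def by (intro mult_left_mono real_sqrt_le_mono) (auto intro: sum_nonneg)
    finally show "cmod (\<Sum>k\<in>S. a k * mu (k - j)) \<le> sqrt (\<Sum>k\<in>S. (cmod (a k))^2) * sqrt M2" .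
  qed simp
  also have "\<dots> = sqrt (\<Sum>k\<in>S. (cmod (a k))^2) * (\<Sum>j\<in>J. cmod (b j)) * sqrt M2"
    by (simp add: sum_distrib_left sum_distrib_right mult_ac)
  finally show ?thesis .
qed

end


lemma L2g_diff:
  assumes "f \<in> L2g N" "g \<in> L2g N"
  shows "(\<lambda>x. f x - g x) \<in> L2g N"
  using L2g_add[OF assms(1) L2g_scale[OF assms(2), of "-1"]] by simp

lemma le_zero_limit:
  fixes c :: real
  assumes "\<And>n. c \<le> u n" "u \<longlonglongrightarrow> 0"
  shows "c \<le> 0"
  using LIMSEQ_le_const[OF assms(2)] assms(1) by blast

context
  fixes M :: "real measure"
  assumes sM: "sets M = sets borel" and fM: "finite_measure M"
    and hm: "(\<lambda>k::int. (cmod (CLINT x|M. ek k x))^2) summable_on UNIV"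
begin

lemma key:
  assumes g: "g \<in> L2g M"
    and s: "\<And>n. s n \<in> finsupp_seqs"
    and a: "(\<lambda>n. l2Z_dist (s n) (\<lambda>k. 0)) \<longlonglongrightarrow> 0"
    and d: "(\<lambda>n. L2_dist M (Fop (s n)) g) \<longlonglongrightarrow> 0"
  shows "AE x in M. g x = 0"
proof -
  define S where "S n = {k. s n k \<noteq> 0}" for n
  have finS: "finite (S n)" for n using s[of n] by (simp add: S_def finsupp_seqs_def)
  define P where "P n = Fop (s n)" for n
  have PL2: "P n \<in> L2g M" for n unfolding P_def by (rule Fop_L2[OF sM fM])
  define C where "C m = (\<Sum>j\<in>S m. cmod (s m j)) * sqrt (M2 M)" for m
  have an: "l2Z_dist (s n) (\<lambda>k. 0) = sqrt (\<Sum>k\<in>S n. (cmod (s n k))^2)" for n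
    by (rule l2Z_finsupp_norm) (use finS in \<open>auto simp: S_def\<close>)
  have A: "cmod (LINT x|M. P n x * cnj (P m x)) \<le> l2Z_dist (s n) (\<lambda>k. 0) * C m" for n m
    using stepA[OF sM fM hm finS[of n] finS[of m], of "s n" "s m"]
    by (simp add: P_def Fop_def[abs_def] S_def[symmetric] an C_def mult.assoc)
  have Dn: "L2_dist M (Fop (s n)) g = nd M (\<lambda>x. P n x - g x)" for n
    by (simp add: L2_dist_nd P_def)
  have B: "(LINT x|M. g x * cnj (P m x)) = 0" for m
  proof -
    have "cmod (LINT x|M. g x * cnj (P m x)) \<le>
          l2Z_dist (s n) (\<lambda>k. 0) * C m + L2_dist M (Fop (s n)) g * nd M (P m)" for n
    proof -
      have i1: "integrable M (\<lambda>x. P n x * cnj (P m x))" by (rule L2g_prod_int[OF PL2 PL2])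
      have i2: "integrable M (\<lambda>x. (P n x - g x) * cnj (P m x))"
        by (rule L2g_prod_int[OF L2g_diff[OF PL2 g] PL2])
      have "(LINT x|M. g x * cnj (P m x)) =
            (LINT x|M. P n x * cnj (P m x)) - (LINT x|M. (P n x - g x) * cnj (P m x))"
      proof -
        have i3: "integrable M (\<lambda>x. g x * cnj (P m x))" by (rule L2g_prod_int[OF g PL2])
        have "(LINT x|M. (P n x - g x) * cnj (P m x)) =
              (LINT x|M. P n x * cnj (P m x) - g x * cnj (P m x))"
          by (simp add: algebra_simps)
        also have "\<dots> = (LINT x|M. P n x * cnj (P m x)) - (LINT x|M. g x * cnj (P m x))"
          by (rule Bochner_Integration.integral_diff[OF i1 i3])
        finally show ?thesis by simp
      qed
      hence "cmod (LINT x|M. g x * cnj (P m x)) \<le>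
             cmod (LINT x|M. P n x * cnj (P m x)) + cmod (LINT x|M. (P n x - g x) * cnj (P m x))"
        by (metis norm_triangle_ineq4)
      also have "\<dots> \<le> l2Z_dist (s n) (\<lambda>k. 0) * C m + nd M (\<lambda>x. P n x - g x) * nd M (P m)"
        using A[of n m] CS[OF L2g_diff[OF PL2[of n] g] PL2[of m]] by linarith
      finally show ?thesis by (simp add: Dn)
    qed
    moreover have "(\<lambda>n. l2Z_dist (s n) (\<lambda>k. 0) * C m + L2_dist M (Fop (s n)) g * nd M (P m))
        \<longlonglongrightarrow> 0"
      using tendsto_add[OF tendsto_mult_left_zero[OF a] tendsto_mult_left_zero[OF d]] by simp
    ultimately have "cmod (LINT x|M. g x * cnj (P m x)) \<le> 0" by (rule le_zero_limit)
    thus ?thesis by simp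
  qed
  have "cmod (LINT x|M. g x * cnj (g x)) \<le> nd M g * L2_dist M (Fop (s m)) g" for m
  proof -
    have i1: "integrable M (\<lambda>x. g x * cnj (P m x))" by (rule L2g_prod_int[OF g PL2])
    have i2: "integrable M (\<lambda>x. g x * cnj (g x - P m x))"
      by (rule L2g_prod_int[OF g L2g_diff[OF g PL2]])
    have "(LINT x|M. g x * cnj (g x)) = (LINT x|M. g x * cnj (g x - P m x)) + (LINT x|M. g x * cnj (P m x))"
    proof -
      have i3: "integrable M (\<lambda>x. g x * cnj (g x))" by (rule L2g_prod_int[OF g g])
      have "(LINT x|M. g x * cnj (g x - P m x)) = (LINT x|M. g x * cnj (g x) - g x * cnj (P m x))"
        by (simp add: algebra_simps)
      also have "\<dots> = (LINT x|M. g x * cnj (g x)) - (LINT x|M. g x * cnj (P m x))"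
        by (rule Bochner_Integration.integral_diff[OF i3 i1])
      finally show ?thesis by simp
    qed
    also have "\<dots> = (LINT x|M. g x * cnj (g x - P m x))" using B[of m] by simp
    finally have "cmod (LINT x|M. g x * cnj (g x)) \<le> nd M g * nd M (\<lambda>x. g x - P m x)"
      using CS[OF g L2g_diff[OF g PL2]] by simp
    also have "nd M (\<lambda>x. g x - P m x) = nd M (\<lambda>x. P m x - g x)"
      by (simp add: nd_def norm_minus_commute)
    finally show ?thesis by (simp add: Dn)
  qed
  moreover have "(\<lambda>m. nd M g * L2_dist M (Fop (s m)) g) \<longlonglongrightarrow> 0"
    using tendsto_mult_right_zero[OF d] by simp
  ultimately have "cmod (LINT x|M. g x * cnj (g x)) \<le> 0" by (rule le_zero_limit)
  hence "(LINT x|M. g x * cnj (g x)) = 0" by simp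
  moreover have "(\<lambda>x. g x * cnj (g x)) = (\<lambda>x. complex_of_real ((cmod (g x))^2))"
    using complex_norm_square by (metis of_real_power)
  ultimately have "(LINT x|M. complex_of_real ((cmod (g x))^2)) = 0" by metis
  hence "complex_of_real (LINT x|M. (cmod (g x))^2) = 0" by (simp only: integral_complex_of_real)
  hence "(LINT x|M. (cmod (g x))^2) = 0" by (simp only: of_real_eq_0_iff)
  hence "AE x in M. (cmod (g x))^2 = 0"
    using integral_nonneg_eq_0_iff_AE[of M "\<lambda>x. (cmod (g x))^2"] g by (simp add: L2g_def)
  thus ?thesis by simp
qed

end


lemma squeeze0:
  fixes x y :: "nat \<Rightarrow> real"
  assumes "\<And>n. 0 \<le> x n" "\<And>n. x n \<le> y n" "y \<longlonglongrightarrow> 0"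
  shows "x \<longlonglongrightarrow> 0"
  by (rule tendsto_sandwich[of "\<lambda>_. 0" x sequentially y]) (use assms in auto)

lemma l2Z_dist_nonneg: "0 \<le> l2Z_dist c d"
  by (simp add: l2Z_dist_nd nd_nonneg)

lemma L2_dist_nonneg: "0 \<le> L2_dist M f g"
  by (simp add: L2_dist_nd nd_nonneg)

lemma l2Z_dist_add:
  assumes "c \<in> l2Z" "d \<in> l2Z" "c' \<in> l2Z" "d' \<in> l2Z"
  shows "l2Z_dist (\<lambda>k. c k + d k) (\<lambda>k. c' k + d' k) \<le> l2Z_dist c c' + l2Z_dist d d'"
proof -
  have "l2Z_dist (\<lambda>k. c k + d k) (\<lambda>k. c' k + d' k) =
        nd (count_space UNIV) (\<lambda>k. (c k - c' k) + (d k - d' k))"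
    by (simp add: l2Z_dist_nd algebra_simps)
  also have "\<dots> \<le> nd (count_space UNIV) (\<lambda>k. c k - c' k) + nd (count_space UNIV) (\<lambda>k. d k - d' k)"
    by (rule nd_triangle) (use assms in \<open>auto simp: l2Z_L2g intro!: L2g_diff\<close>)
  finally show ?thesis by (simp add: l2Z_dist_nd)
qed

lemma L2_dist_add:
  assumes "f \<in> L2 M" "g \<in> L2 M" "f' \<in> L2 M" "g' \<in> L2 M"
  shows "L2_dist M (\<lambda>x. f x + g x) (\<lambda>x. f' x + g' x) \<le> L2_dist M f f' + L2_dist M g g'"
proof -
  have "L2_dist M (\<lambda>x. f x + g x) (\<lambda>x. f' x + g' x) = nd M (\<lambda>x. (f x - f' x) + (g x - g' x))"
    by (simp add: L2_dist_nd algebra_simps)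
  also have "\<dots> \<le> nd M (\<lambda>x. f x - f' x) + nd M (\<lambda>x. g x - g' x)"
    by (rule nd_triangle) (use assms in \<open>auto simp: L2_L2g intro!: L2g_diff\<close>)
  finally show ?thesis by (simp add: L2_dist_nd)
qed

lemma l2Z_dist_scale: "l2Z_dist (\<lambda>k. a * c k) (\<lambda>k. a * d k) = cmod a * l2Z_dist c d"
proof -
  have "l2Z_dist (\<lambda>k. a * c k) (\<lambda>k. a * d k) = nd (count_space UNIV) (\<lambda>k. a * (c k - d k))"
    by (simp add: l2Z_dist_nd algebra_simps)
  thus ?thesis by (simp add: nd_scale l2Z_dist_nd)
qed

lemma L2_dist_scale: "L2_dist M (\<lambda>x. a * f x) (\<lambda>x. a * g x) = cmod a * L2_dist M f g"
proof -
  have "L2_dist M (\<lambda>x. a * f x) (\<lambda>x. a * g x) = nd M (\<lambda>x. a * (f x - g x))"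
    by (simp add: L2_dist_nd algebra_simps)
  thus ?thesis by (simp add: nd_scale L2_dist_nd)
qed

context
  fixes M :: "real measure"
  assumes sM: "sets M = sets borel" and fM: "finite_measure M"
begin

lemma Fop_in_L2: "Fop c \<in> L2 M"
  using Fop_L2[OF sM fM] by (simp add: L2_L2g)

lemma GC_add:
  assumes "(c, g) \<in> graph_closure M" "(d, h) \<in> graph_closure M"
  shows "((\<lambda>k. c k + d k), (\<lambda>x. g x + h x)) \<in> graph_closure M"
proof -
  obtain s where s: "\<And>n. s n \<in> finsupp_seqs" "(\<lambda>n. l2Z_dist (s n) c) \<longlonglongrightarrow> 0"
      "(\<lambda>n. L2_dist M (Fop (s n)) g) \<longlonglongrightarrow> 0" and c: "c \<in> l2Z" and g: "g \<in> L2 M"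
    using assms(1) unfolding graph_closure_def by blast
  obtain t where t: "\<And>n. t n \<in> finsupp_seqs" "(\<lambda>n. l2Z_dist (t n) d) \<longlonglongrightarrow> 0"
      "(\<lambda>n. L2_dist M (Fop (t n)) h) \<longlonglongrightarrow> 0" and d: "d \<in> l2Z" and h: "h \<in> L2 M"
    using assms(2) unfolding graph_closure_def by blast
  define u where "u n = (\<lambda>k. s n k + t n k)" for n
  have fs: "finite {k. s n k \<noteq> 0}" "finite {k. t n k \<noteq> 0}" for n
    using s(1) t(1) by (auto simp: finsupp_seqs_def)
  have sub: "{k. u n k \<noteq> 0} \<subseteq> {k. s n k \<noteq> 0} \<union> {k. t n k \<noteq> 0}" for n
    by (auto simp: u_def)
  have u: "u n \<in> finsupp_seqs" for n
    using finite_subset[OF sub] fs by (auto simp: finsupp_seqs_def)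
  have Fu: "Fop (u n) = (\<lambda>x. Fop (s n) x + Fop (t n) x)" for n
  proof
    fix x
    let ?S = "{k. s n k \<noteq> 0} \<union> {k. t n k \<noteq> 0}"
    have "Fop (u n) x = (\<Sum>k\<in>?S. u n k * ek k x)" by (rule Fop_eq) (use fs sub in auto)
    also have "\<dots> = (\<Sum>k\<in>?S. s n k * ek k x) + (\<Sum>k\<in>?S. t n k * ek k x)"
      by (simp add: u_def distrib_right sum.distrib)
    also have "\<dots> = Fop (s n) x + Fop (t n) x"
      by (simp add: Fop_eq[symmetric] fs)
    finally show "Fop (u n) x = Fop (s n) x + Fop (t n) x" .
  qed
  have "(\<lambda>n. l2Z_dist (u n) (\<lambda>k. c k + d k)) \<longlonglongrightarrow> 0"
  proof (rule squeeze0)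
    show "l2Z_dist (u n) (\<lambda>k. c k + d k) \<le> l2Z_dist (s n) c + l2Z_dist (t n) d" for n
      unfolding u_def by (rule l2Z_dist_add) (use s t c d in \<open>auto intro: finsupp_l2Z\<close>)
    show "(\<lambda>n. l2Z_dist (s n) c + l2Z_dist (t n) d) \<longlonglongrightarrow> 0"
      using tendsto_add[OF s(2) t(2)] by simp
  qed (rule l2Z_dist_nonneg)
  moreover have "(\<lambda>n. L2_dist M (Fop (u n)) (\<lambda>x. g x + h x)) \<longlonglongrightarrow> 0"
  proof (rule squeeze0)
    show "L2_dist M (Fop (u n)) (\<lambda>x. g x + h x) \<le> L2_dist M (Fop (s n)) g + L2_dist M (Fop (t n)) h" for n
      unfolding Fu by (rule L2_dist_add) (use g h in \<open>auto intro: Fop_in_L2\<close>)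
    show "(\<lambda>n. L2_dist M (Fop (s n)) g + L2_dist M (Fop (t n)) h) \<longlonglongrightarrow> 0"
      using tendsto_add[OF s(3) t(3)] by simp
  qed (rule L2_dist_nonneg)
  moreover have "(\<lambda>k. c k + d k) \<in> l2Z" using c d by (simp add: l2Z_L2g L2g_add)
  moreover have "(\<lambda>x. g x + h x) \<in> L2 M" using g h by (simp add: L2_L2g L2g_add)
  ultimately show ?thesis unfolding graph_closure_def using u by blast
qed

lemma GC_scale:
  assumes "(c, g) \<in> graph_closure M"
  shows "((\<lambda>k. a * c k), (\<lambda>x. a * g x)) \<in> graph_closure M"
proof -
  obtain s where s: "\<And>n. s n \<in> finsupp_seqs" "(\<lambda>n. l2Z_dist (s n) c) \<longlonglongrightarrow> 0"
      "(\<lambda>n. L2_dist M (Fop (s n)) g) \<longlonglongrightarrow> 0" and c: "c \<in> l2Z" and g: "g \<in> L2 M"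
    using assms(1) unfolding graph_closure_def by blast
  define u where "u n = (\<lambda>k. a * s n k)" for n
  have fs: "finite {k. s n k \<noteq> 0}" for n
    using s(1) by (auto simp: finsupp_seqs_def)
  have sub: "{k. u n k \<noteq> 0} \<subseteq> {k. s n k \<noteq> 0}" for n
    by (auto simp: u_def)
  have u: "u n \<in> finsupp_seqs" for n
    using finite_subset[OF sub] fs by (auto simp: finsupp_seqs_def)
  have Fu: "Fop (u n) = (\<lambda>x. a * Fop (s n) x)" for n
  proof
    fix x
    have "Fop (u n) x = (\<Sum>k\<in>{k. s n k \<noteq> 0}. u n k * ek k x)" by (rule Fop_eq) (use fs sub in auto)
    also have "\<dots> = a * Fop (s n) x"
      by (simp add: u_def Fop_def sum_distrib_left mult.assoc)
    finally show "Fop (u n) x = a * Fop (s n) x" .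
  qed
  have "(\<lambda>n. l2Z_dist (u n) (\<lambda>k. a * c k)) \<longlonglongrightarrow> 0"
    unfolding u_def l2Z_dist_scale using tendsto_mult_right_zero[OF s(2)] by simp
  moreover have "(\<lambda>n. L2_dist M (Fop (u n)) (\<lambda>x. a * g x)) \<longlonglongrightarrow> 0"
    unfolding Fu L2_dist_scale using tendsto_mult_right_zero[OF s(3)] by simp
  moreover have "(\<lambda>k. a * c k) \<in> l2Z" using c by (simp add: l2Z_L2g L2g_scale)
  moreover have "(\<lambda>x. a * g x) \<in> L2 M" using g by (simp add: L2_L2g L2g_scale)
  ultimately show ?thesis unfolding graph_closure_def using u by blast
qed

lemma GC_AE:
  assumes "(c, g) \<in> graph_closure M" "h \<in> L2 M" "AE x in M. h x = g x"
  shows "(c, h) \<in> graph_closure M"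
proof -
  obtain s where s: "\<And>n. s n \<in> finsupp_seqs" "(\<lambda>n. l2Z_dist (s n) c) \<longlonglongrightarrow> 0"
      "(\<lambda>n. L2_dist M (Fop (s n)) g) \<longlonglongrightarrow> 0" and c: "c \<in> l2Z" and g: "g \<in> L2 M"
    using assms(1) unfolding graph_closure_def by blast
  have "L2_dist M (Fop (s n)) h = L2_dist M (Fop (s n)) g" for n
  proof -
    have [measurable]: "Fop (s n) \<in> borel_measurable M" "g \<in> borel_measurable M" "h \<in> borel_measurable M"
      using Fop_meas[OF sM fM] g assms(2) by (auto simp: L2_def)
    have "(LINT x|M. (cmod (Fop (s n) x - h x))^2) = (LINT x|M. (cmod (Fop (s n) x - g x))^2)"
      by (rule integral_cong_AE) (use assms(3) in auto)
    thus ?thesis by (simp add: L2_dist_def)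
  qed
  hence "(\<lambda>n. L2_dist M (Fop (s n)) h) \<longlonglongrightarrow> 0" using s(3) by simp
  thus ?thesis using s(1,2) c assms(2) unfolding graph_closure_def by blast
qed

end


context
  fixes M :: "real measure"
  assumes sM: "sets M = sets borel" and fM: "finite_measure M"
    and hm: "(\<lambda>k::int. (cmod (CLINT x|M. ek k x))^2) summable_on UNIV"
begin

lemma GC_zero:
  assumes "((\<lambda>k. 0), f) \<in> graph_closure M"
  shows "AE x in M. f x = 0"
proof -
  obtain s where s: "\<And>n. s n \<in> finsupp_seqs" "(\<lambda>n. l2Z_dist (s n) (\<lambda>k. 0)) \<longlonglongrightarrow> 0"
      "(\<lambda>n. L2_dist M (Fop (s n)) f) \<longlonglongrightarrow> 0" and f: "f \<in> L2 M"
    using assms unfolding graph_closure_def by blast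
  show ?thesis by (rule key[OF sM fM hm _ s]) (use f in \<open>simp add: L2_L2g\<close>)
qed

lemma GC_uniq:
  assumes "(c, g) \<in> graph_closure M" "(c, h) \<in> graph_closure M"
  shows "AE x in M. g x = h x"
proof -
  have "((\<lambda>k. c k + -1 * c k), (\<lambda>x. g x + -1 * h x)) \<in> graph_closure M"
    by (rule GC_add[OF sM fM assms(1) GC_scale[OF sM fM assms(2)]])
  hence "((\<lambda>k. 0), (\<lambda>x. g x + -1 * h x)) \<in> graph_closure M" by simp
  from GC_zero[OF this] show ?thesis by eventually_elim simp
qed

lemma closable: "closable_F M"
proof -
  define GC where "GC = graph_closure M"
  define Dom where "Dom = {c. \<exists>g. (c, g) \<in> GC}"
  define T where "T c = (SOME g. (c, g) \<in> GC)" for c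
  have TGC: "c \<in> Dom \<Longrightarrow> (c, T c) \<in> GC" for c
    unfolding Dom_def T_def by (metis (mono_tags, lifting) mem_Collect_eq someI_ex)
  have GCL2: "(c, g) \<in> GC \<Longrightarrow> g \<in> L2 M" for c g
    unfolding GC_def graph_closure_def by auto
  show ?thesis unfolding closable_F_def
  proof (intro exI[of _ Dom] exI[of _ T] conjI ballI allI)
    fix c d assume c: "c \<in> Dom" and d: "d \<in> Dom"
    have 1: "((\<lambda>k. c k + d k), (\<lambda>x. T c x + T d x)) \<in> GC"
      using GC_add[OF sM fM TGC[OF c, unfolded GC_def] TGC[OF d, unfolded GC_def]] by (simp add: GC_def)
    thus "(\<lambda>k. c k + d k) \<in> Dom" unfolding Dom_def by blast
    hence 2: "((\<lambda>k. c k + d k), T (\<lambda>k. c k + d k)) \<in> GC" by (rule TGC)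
    show "AE x in M. T (\<lambda>k. c k + d k) x = T c x + T d x"
      using GC_uniq[OF 2[unfolded GC_def] 1[unfolded GC_def]] .
  next
    fix c a assume c: "c \<in> Dom"
    have 1: "((\<lambda>k. a * c k), (\<lambda>x. a * T c x)) \<in> GC"
      using GC_scale[OF sM fM TGC[OF c, unfolded GC_def]] by (simp add: GC_def)
    thus "(\<lambda>k. a * c k) \<in> Dom" unfolding Dom_def by blast
    hence 2: "((\<lambda>k. a * c k), T (\<lambda>k. a * c k)) \<in> GC" by (rule TGC)
    show "AE x in M. T (\<lambda>k. a * c k) x = a * T c x"
      using GC_uniq[OF 2[unfolded GC_def] 1[unfolded GC_def]] .
  next
    fix c assume "c \<in> Dom"
    thus "T c \<in> L2 M" using TGC GCL2 by blast
  next
    show "graph_closure M = {(c, g). c \<in> Dom \<and> g \<in> L2 M \<and> (AE x in M. g x = T c x)}"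
    proof (intro set_eqI iffI)
      fix p assume p: "p \<in> graph_closure M"
      obtain c g where pc: "p = (c, g)" by (cases p)
      have cg: "(c, g) \<in> GC" using p pc by (simp add: GC_def)
      hence c: "c \<in> Dom" unfolding Dom_def by blast
      have "AE x in M. g x = T c x"
        using GC_uniq[OF cg[unfolded GC_def] TGC[OF c, unfolded GC_def]] .
      thus "p \<in> {(c, g). c \<in> Dom \<and> g \<in> L2 M \<and> (AE x in M. g x = T c x)}"
        using pc c GCL2[OF cg] by simp
    next
      fix p assume "p \<in> {(c, g). c \<in> Dom \<and> g \<in> L2 M \<and> (AE x in M. g x = T c x)}"
      then obtain c g where pc: "p = (c, g)" and c: "c \<in> Dom" and g: "g \<in> L2 M"
        and ae: "AE x in M. g x = T c x" by auto
      show "p \<in> graph_closure M"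
        using GC_AE[OF sM fM TGC[OF c, unfolded GC_def] g ae] pc by simp
    qed
  qed
qed

end

theorem lemma3p5:
  fixes M :: "real measure"
  assumes "sets M = sets borel"
    and "finite_measure M"
    and "emeasure M (UNIV - {0..1}) = 0"
    and "(\<lambda>k::int. (cmod (CLINT x|M. ek k x))^2) summable_on UNIV"
  shows "closable_F M"
  by (rule closable[OF assms(1,2,4)])


end
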